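(* For every $\delta$-algebra $A$, the homomorphism $\eta_A\colon A\to C(\mathrm{Max}\,A,[0,1])$, $a\mapsto\hat a$, is an epimorphism in the category $\Delta$ of $\delta$-algebras and $\delta$-homomorphisms.
   Context: An MV-algebra is an algebra $(A,\oplus,\neg,0)$ of type $(2,1,0)$ such that $(A,\oplus,0)$ is a commutative monoid, $\neg\neg a=a$, $a\oplus\neg 0=\neg 0$, and $\neg(\neg a\oplus b)\oplus b=\neg(\neg b\oplus a)\oplus a$. Derived operations: $1:=\neg 0$, $a\odot b:=\neg(\neg a\oplus\neg b)$, $a\ominus b:=a\odot\neg b$, $a\vee b:=\neg(\neg a\oplus b)\oplus b$ (join of a lattice order $\le$), $d(a,b):=(a\ominus b)\oplus(b\ominus a)$. Let $\mathcal{L}=\{\delta,\oplus,\neg,0\}$ of type $(\omega,2,1,0)$; $\tfrac12(x):=\delta(x,0,0,\dots)$. A $\delta$-algebra is an $\mathcal{L}$-algebra whose MV-reduct is an MV-algebra and satisfying for all $x,y,\vec x,\vec y$: (i) $d(\delta(\vec x),\delta(x_1,0,0,\dots))=\delta(0,x_2,x_3,\dots)$; (ii) $\tfrac12(\delta(\vec x))=\delta(\tfrac12(x_1),\tfrac12(x_2),\dots)$; (iii) $\delta(x,x,\dots)=x$; (iv) $\delta(0,\vec x)=\tfrac12(\delta(\vec x))$; (v) $\delta(\vec x)\le\delta(x_1\oplus y_1,x_2\oplus y_2,\dots)$; (vi) $\tfrac12(x\ominus y)=\tfrac12(x)\ominus\tfrac12(y)$. A $\delta$-homomorphism is a map preserving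 $\delta,\oplus,\neg,0$. $[0,1]$ is the standard $\delta$-algebra with $x\oplus y=\min\{1,x+y\}$, $\neg x=1-x$, $\delta(\vec x)=\sum_i x_i/2^i$. For a compact Hausdorff space $X$, $C(X,[0,1])$ is the $\delta$-algebra of continuous maps $X\to[0,1]$ with pointwise MV-operations and $\delta(\vec{\mathbf g}):=\sum_{i\ge1}\mathbf g_i/2^i$ (a uniformly convergent series). For a $\delta$-algebra $A$, $\mathrm{Max}\,A$ is the set of MV-algebra homomorphisms $A\to[0,1]$ with the subspace topology of $[0,1]^A$ (compact Hausdorff); for $a\in A$, $\hat a\colon\mathrm{Max}\,A\to[0,1]$, $\hat a(h):=h(a)$. *)

theory Defs
  imports "HOL-Analysis.Analysis"
begin

text \<open>An L-algebra (type (omega,2,1,0)) given by a carrier set and operations.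
  Infinite argument sequences are functions nat => 'a, where index 0 is the
  first argument x_1.\<close>

record 'a dalg =
  dcar   :: "'a set"
  dplus  :: "'a \<Rightarrow> 'a \<Rightarrow> 'a"
  dneg   :: "'a \<Rightarrow> 'a"
  dzero  :: "'a"
  ddelta :: "(nat \<Rightarrow> 'a) \<Rightarrow> 'a"

definition dunit :: "'a dalg \<Rightarrow> 'a" where
  "dunit A = dneg A (dzero A)"

definition dodot :: "'a dalg \<Rightarrow> 'a \<Rightarrow> 'a \<Rightarrow> 'a" where
  "dodot A a b = dneg A (dplus A (dneg A a) (dneg A b))"

definition dominus :: "'a dalg \<Rightarrow> 'a \<Rightarrow> 'a \<Rightarrow> 'a" where
  "dominus A a b = dodot A a (dneg A b)"

definition djoin :: "'a dalg \<Rightarrow> 'a \<Rightarrow> 'a \<Rightarrow> 'a" where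
  "djoin A a b = dplus A (dneg A (dplus A (dneg A a) b)) b"

definition dle :: "'a dalg \<Rightarrow> 'a \<Rightarrow> 'a \<Rightarrow> bool" where
  "dle A a b \<longleftrightarrow> djoin A a b = b"

definition ddist :: "'a dalg \<Rightarrow> 'a \<Rightarrow> 'a \<Rightarrow> 'a" where
  "ddist A a b = dplus A (dominus A a b) (dominus A b a)"

definition dhalf :: "'a dalg \<Rightarrow> 'a \<Rightarrow> 'a" where
  "dhalf A x = ddelta A (\<lambda>i. if i = 0 then x else dzero A)"

definition mv_algebra :: "'a dalg \<Rightarrow> bool" where
  "mv_algebra A \<longleftrightarrow>
     dzero A \<in> dcar A \<and>
     (\<forall>a\<in>dcar A. \<forall>b\<in>dcar A. dplus A a b \<in> dcar A) \<and>
     (\<forall>a\<in>dcar A. dneg A a \<in> dcar A) \<and>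
     (\<forall>a\<in>dcar A. \<forall>b\<in>dcar A. \<forall>c\<in>dcar A.
        dplus A (dplus A a b) c = dplus A a (dplus A b c)) \<and>
     (\<forall>a\<in>dcar A. \<forall>b\<in>dcar A. dplus A a b = dplus A b a) \<and>
     (\<forall>a\<in>dcar A. dplus A a (dzero A) = a) \<and>
     (\<forall>a\<in>dcar A. dneg A (dneg A a) = a) \<and>
     (\<forall>a\<in>dcar A. dplus A a (dneg A (dzero A)) = dneg A (dzero A)) \<and>
     (\<forall>a\<in>dcar A. \<forall>b\<in>dcar A.
        dplus A (dneg A (dplus A (dneg A a) b)) b =
        dplus A (dneg A (dplus A (dneg A b) a)) a)"

definition delta_algebra :: "'a dalg \<Rightarrow> bool" where
  "delta_algebra A \<longleftrightarrow>
     mv_algebra A \<and>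
     (\<forall>x. (\<forall>i. x i \<in> dcar A) \<longrightarrow> ddelta A x \<in> dcar A) \<and>
     \<comment> \<open>(i)\<close>
     (\<forall>x. (\<forall>i. x i \<in> dcar A) \<longrightarrow>
        ddist A (ddelta A x) (ddelta A (\<lambda>i. if i = 0 then x 0 else dzero A))
        = ddelta A (\<lambda>i. if i = 0 then dzero A else x i)) \<and>
     \<comment> \<open>(ii)\<close>
     (\<forall>x. (\<forall>i. x i \<in> dcar A) \<longrightarrow>
        dhalf A (ddelta A x) = ddelta A (\<lambda>i. dhalf A (x i))) \<and>
     \<comment> \<open>(iii)\<close>
     (\<forall>x\<in>dcar A. ddelta A (\<lambda>i. x) = x) \<and>
     \<comment> \<open>(iv)\<close>
     (\<forall>x. (\<forall>i. x i \<in> dcar A) \<longrightarrow>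
        ddelta A (\<lambda>i. if i = 0 then dzero A else x (i - 1)) = dhalf A (ddelta A x)) \<and>
     \<comment> \<open>(v)\<close>
     (\<forall>x y. (\<forall>i. x i \<in> dcar A) \<longrightarrow> (\<forall>i. y i \<in> dcar A) \<longrightarrow>
        dle A (ddelta A x) (ddelta A (\<lambda>i. dplus A (x i) (y i)))) \<and>
     \<comment> \<open>(vi)\<close>
     (\<forall>x\<in>dcar A. \<forall>y\<in>dcar A.
        dhalf A (dominus A x y) = dominus A (dhalf A x) (dhalf A y))"

definition delta_hom :: "'a dalg \<Rightarrow> 'b dalg \<Rightarrow> ('a \<Rightarrow> 'b) \<Rightarrow> bool" where
  "delta_hom A B f \<longleftrightarrow>
     (\<forall>a\<in>dcar A. f a \<in> dcar B) \<and>
     (\<forall>a\<in>dcar A. \<forall>b\<in>dcar A. f (dplus A a b) = dplus B (f a) (f b)) \<and>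
     (\<forall>a\<in>dcar A. f (dneg A a) = dneg B (f a)) \<and>
     f (dzero A) = dzero B \<and>
     (\<forall>x. (\<forall>i. x i \<in> dcar A) \<longrightarrow> f (ddelta A x) = ddelta B (\<lambda>i. f (x i)))"

text \<open>Max A: MV-algebra homomorphisms A -> [0,1]. Such maps are represented as
  functions 'a => real that are 0 outside the carrier, so the subspace topology
  of the product topology on 'a => real coincides with that of [0,1]^A.\<close>

definition MaxSpec :: "'a dalg \<Rightarrow> ('a \<Rightarrow> real) set" where
  "MaxSpec A = {h.
     (\<forall>a\<in>dcar A. h a \<in> {0..1}) \<and>
     (\<forall>a\<in>dcar A. \<forall>b\<in>dcar A. h (dplus A a b) = min 1 (h a + h b)) \<and>
     (\<forall>a\<in>dcar A. h (dneg A a) = 1 - h a) \<and>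
     h (dzero A) = 0 \<and>
     (\<forall>a. a \<notin> dcar A \<longrightarrow> h a = 0)}"

text \<open>The delta-algebra C(X,[0,1]) of continuous maps X -> [0,1]; maps are
  represented as functions that are 0 outside X.\<close>

definition cont_dalg :: "'x::topological_space set \<Rightarrow> ('x \<Rightarrow> real) dalg" where
  "cont_dalg X = \<lparr>
     dcar = {f. continuous_on X f \<and> (\<forall>x\<in>X. f x \<in> {0..1}) \<and> (\<forall>x. x \<notin> X \<longrightarrow> f x = 0)},
     dplus = (\<lambda>f g x. if x \<in> X then min 1 (f x + g x) else 0),
     dneg = (\<lambda>f x. if x \<in> X then 1 - f x else 0),
     dzero = (\<lambda>x. 0),
     ddelta = (\<lambda>gs x. if x \<in> X then (\<Sum>i. gs i x / 2 ^ Suc i) else 0) \<rparr>"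

definition eta :: "'a dalg \<Rightarrow> 'a \<Rightarrow> (('a \<Rightarrow> real) \<Rightarrow> real)" where
  "eta A a = (\<lambda>h. if h \<in> MaxSpec A then h a else 0)"

end

theory Submission
  imports Defs
begin


lemma half_pow_summable: "summable (\<lambda>i. (1/2::real)^Suc i)"
  using power_half_series summable_def by blast

lemma dsum_basic:
  fixes c :: "nat \<Rightarrow> real"
  assumes "\<And>i. 0 \<le> c i" "\<And>i. c i \<le> 1"
  shows "summable (\<lambda>i. c i / 2^Suc i)" "0 \<le> (\<Sum>i. c i / 2^Suc i)" "(\<Sum>i. c i / 2^Suc i) \<le> 1"
proof -
  have le: "norm (c i / 2^Suc i) \<le> (1/2)^Suc i" for i
    using assms[of i] by (simp add: power_divide divide_right_mono)
  show s: "summable (\<lambda>i. c i / 2^Suc i)"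
    by (rule summable_comparison_test[OF _ half_pow_summable]) (use le in auto)
  show "0 \<le> (\<Sum>i. c i / 2^Suc i)" using assms by (intro suminf_nonneg s) auto
  have "(\<Sum>i. c i / 2^Suc i) \<le> (\<Sum>i. (1/2::real)^Suc i)"
    by (rule suminf_le) (use le assms s half_pow_summable in \<open>auto simp: power_divide\<close>)
  then show "(\<Sum>i. c i / 2^Suc i) \<le> 1" using power_half_series sums_unique by fastforce
qed

lemma dsum_const: "(\<Sum>i. (c::real) / 2^Suc i) = c"
proof -
  have "(\<lambda>i. c * (1/2)^Suc i) sums (c * 1)" by (rule sums_mult[OF power_half_series])
  then show ?thesis by (simp add: power_divide sums_iff)
qed

lemma dsum_head:
  fixes c :: "nat \<Rightarrow> real"
  assumes "summable (\<lambda>i. c i / 2^Suc i)"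
  shows "(\<Sum>i. c i / 2^Suc i) = c 0 / 2 + (\<Sum>i. (if i = 0 then 0 else c i) / 2^Suc i)"
proof -
  have 1: "(\<lambda>i. if i = 0 then c 0 / 2 else 0) sums (c 0 / 2)"
    using sums_single[of 0 "\<lambda>_. c 0 / 2"] by simp
  have 2: "(\<lambda>i. c i / 2^Suc i - (if i = 0 then c 0 / 2 else 0)) sums ((\<Sum>i. c i / 2^Suc i) - c 0 / 2)"
    by (intro sums_diff 1 summable_sums assms)
  have "(\<lambda>i. (if i = 0 then 0 else c i) / 2^Suc i) = (\<lambda>i. c i / 2^Suc i - (if i = 0 then c 0 / 2 else 0))"
    by auto
  with 2 show ?thesis by (simp add: sums_iff)
qed

lemma dsum_single: "(\<Sum>i. (if i = 0 then (c::real) else 0) / 2^Suc i) = c / 2"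
proof -
  have "(\<lambda>i. (if i = 0 then (c::real) else 0) / 2^Suc i) = (\<lambda>i. if i = 0 then c/2 else 0)" by auto
  then show ?thesis using sums_single[of 0 "\<lambda>_. c / 2"] sums_unique by (metis (no_types, lifting))
qed

lemma dsum_shift:
  fixes c :: "nat \<Rightarrow> real"
  assumes "summable (\<lambda>i. c i / 2^Suc i)"
  shows "(\<Sum>i. (if i = 0 then 0 else c (i - 1)) / 2^Suc i) = (\<Sum>i. c i / 2^Suc i) / 2"
proof -
  have "(\<lambda>i. c i / 2^Suc i / 2) sums ((\<Sum>i. c i / 2^Suc i) / 2)"
    by (intro sums_divide summable_sums assms)
  then have "(\<lambda>i. (if Suc i = 0 then 0 else c (Suc i - 1)) / 2^Suc (Suc i)) sums ((\<Sum>i. c i / 2^Suc i) / 2)"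
    by (simp add: field_simps)
  then have "(\<lambda>i. (if i = 0 then 0 else c (i - 1)) / 2^Suc i) sums ((\<Sum>i. c i / 2^Suc i) / 2 + 0)"
    by (subst (asm) sums_Suc_iff) simp
  then show ?thesis by (simp add: sums_iff)
qed



lemma cd_simps:
  "dcar (cont_dalg X) = {f. continuous_on X f \<and> (\<forall>x\<in>X. f x \<in> {0..1}) \<and> (\<forall>x. x \<notin> X \<longrightarrow> f x = 0)}"
  "dplus (cont_dalg X) = (\<lambda>f g x. if x \<in> X then min 1 (f x + g x) else 0)"
  "dneg (cont_dalg X) = (\<lambda>f x. if x \<in> X then 1 - f x else 0)"
  "dzero (cont_dalg X) = (\<lambda>x. 0)"
  "ddelta (cont_dalg X) = (\<lambda>gs x. if x \<in> X then (\<Sum>i. gs i x / 2 ^ Suc i) else 0)"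
  by (simp_all add: cont_dalg_def)

lemma car_D:
  assumes "f \<in> dcar (cont_dalg X)"
  shows "continuous_on X f" "x \<in> X \<Longrightarrow> 0 \<le> f x" "x \<in> X \<Longrightarrow> f x \<le> 1" "x \<notin> X \<Longrightarrow> f x = 0"
  using assms by (auto simp: cd_simps)

lemma car_I:
  assumes "continuous_on X f" "\<And>x. x \<in> X \<Longrightarrow> 0 \<le> f x \<and> f x \<le> 1" "\<And>x. x \<notin> X \<Longrightarrow> f x = 0"
  shows "f \<in> dcar (cont_dalg X)"
  using assms by (auto simp: cd_simps)

lemma car_eqI:
  assumes "\<And>x. x \<in> X \<Longrightarrow> f x = g x" "\<And>x. x \<notin> X \<Longrightarrow> f x = g x"
  shows "f = g" using assms by blast

lemma delta_cont:
  assumes "\<And>i. gs i \<in> dcar (cont_dalg X)"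
  shows "continuous_on X (\<lambda>x. \<Sum>i. gs i x / 2 ^ Suc i)"
proof (rule uniform_limit_theorem[where F=sequentially])
  show "\<forall>\<^sub>F n in sequentially. continuous_on X (\<lambda>x. \<Sum>i<n. gs i x / 2 ^ Suc i)"
    using car_D(1)[OF assms] by (intro always_eventually allI continuous_intros) auto
  show "uniform_limit X (\<lambda>n x. \<Sum>i<n. gs i x / 2 ^ Suc i) (\<lambda>x. \<Sum>i. gs i x / 2 ^ Suc i) sequentially"
  proof (rule Weierstrass_m_test[OF _ half_pow_summable])
    fix n x assume "x \<in> X"
    then show "norm (gs n x / 2 ^ Suc n) \<le> (1/2)^Suc n"
      using car_D(2,3)[OF assms[of n], of x] by (simp add: power_divide divide_right_mono)
  qed
qed simp

lemma dsum_car: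
  assumes "\<And>i. gs i \<in> dcar (cont_dalg X)" "x \<in> X"
  shows "summable (\<lambda>i. gs i x / 2^Suc i)" "0 \<le> (\<Sum>i. gs i x / 2^Suc i)" "(\<Sum>i. gs i x / 2^Suc i) \<le> 1"
  using dsum_basic[of "\<lambda>i. gs i x"] car_D(2,3)[OF assms(1) assms(2)] by auto

lemma delta_car:
  assumes "\<And>i. gs i \<in> dcar (cont_dalg X)"
  shows "ddelta (cont_dalg X) gs \<in> dcar (cont_dalg X)"
proof (rule car_I)
  show "continuous_on X (ddelta (cont_dalg X) gs)"
    unfolding cd_simps by (rule continuous_on_cong[THEN iffD2, OF refl _ delta_cont[OF assms]]) auto
qed (use dsum_car[OF assms] in \<open>auto simp: cd_simps\<close>)

lemma plus_car:
  assumes "f \<in> dcar (cont_dalg X)" "g \<in> dcar (cont_dalg X)"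
  shows "dplus (cont_dalg X) f g \<in> dcar (cont_dalg X)"
proof (rule car_I)
  have "continuous_on X (\<lambda>x. min 1 (f x + g x))"
    using car_D(1)[OF assms(1)] car_D(1)[OF assms(2)] by (intro continuous_intros) auto
  then show "continuous_on X (dplus (cont_dalg X) f g)"
    unfolding cd_simps by (rule continuous_on_cong[THEN iffD2, OF refl, rotated]) auto
qed (use car_D[OF assms(1)] car_D[OF assms(2)] in \<open>auto simp: cd_simps\<close>)

lemma neg_car:
  assumes "f \<in> dcar (cont_dalg X)"
  shows "dneg (cont_dalg X) f \<in> dcar (cont_dalg X)"
proof (rule car_I)
  have "continuous_on X (\<lambda>x. 1 - f x)"
    using car_D(1)[OF assms(1)] by (intro continuous_intros) auto
  then show "continuous_on X (dneg (cont_dalg X) f)"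
    unfolding cd_simps by (rule continuous_on_cong[THEN iffD2, OF refl, rotated]) auto
qed (use car_D[OF assms(1)] in \<open>auto simp: cd_simps\<close>)

lemma zero_car: "dzero (cont_dalg X) \<in> dcar (cont_dalg X)"
  by (auto simp: cd_simps)

lemma pt_simps:
  assumes "x \<in> X"
  shows "dplus (cont_dalg X) f g x = min 1 (f x + g x)"
    "dneg (cont_dalg X) f x = 1 - f x"
    "dzero (cont_dalg X) x = 0"
    "ddelta (cont_dalg X) gs x = (\<Sum>i. gs i x / 2 ^ Suc i)"
    "dominus (cont_dalg X) f g x = max 0 (f x - g x)"
    "dhalf (cont_dalg X) f x = f x / 2"
proof -
  show "dplus (cont_dalg X) f g x = min 1 (f x + g x)"
    "dneg (cont_dalg X) f x = 1 - f x"
    "dzero (cont_dalg X) x = 0"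
    "ddelta (cont_dalg X) gs x = (\<Sum>i. gs i x / 2 ^ Suc i)"
    "dominus (cont_dalg X) f g x = max 0 (f x - g x)"
    using assms by (auto simp: cd_simps dominus_def dodot_def)
  have "(\<lambda>i. (if i = 0 then f else dzero (cont_dalg X)) x / 2 ^ Suc i) = (\<lambda>i. (if i = 0 then f x else 0) / 2 ^ Suc i)"
    by (auto simp: cd_simps)
  then show "dhalf (cont_dalg X) f x = f x / 2"
    using assms dsum_single[of "f x"] unfolding dhalf_def by (simp only: cd_simps if_True)
qed

lemma pt_join:
  assumes "x \<in> X" "f x \<le> 1" "g x \<le> 1"
  shows "djoin (cont_dalg X) f g x = max (f x) (g x)"
  using assms by (auto simp: cd_simps djoin_def min_def max_def)

lemma out_simps:
  assumes "x \<notin> X"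
  shows "dplus (cont_dalg X) f g x = 0"
    "dneg (cont_dalg X) f x = 0"
    "dzero (cont_dalg X) x = 0"
    "ddelta (cont_dalg X) gs x = 0"
    "dominus (cont_dalg X) f g x = 0"
    "djoin (cont_dalg X) f g x = 0"
    "dhalf (cont_dalg X) f x = 0"
  using assms by (auto simp: cd_simps dominus_def dodot_def djoin_def dhalf_def)



lemma cd_mv: "mv_algebra (cont_dalg X)"
  unfolding mv_algebra_def
proof (intro conjI ballI)
  show "dzero (cont_dalg X) \<in> dcar (cont_dalg X)" by (rule zero_car)
next
  fix a b assume "a \<in> dcar (cont_dalg X)" "b \<in> dcar (cont_dalg X)"
  then show "dplus (cont_dalg X) a b \<in> dcar (cont_dalg X)" by (rule plus_car)
next
  fix a assume "a \<in> dcar (cont_dalg X)"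
  then show "dneg (cont_dalg X) a \<in> dcar (cont_dalg X)" by (rule neg_car)
next
  fix a b c assume "a \<in> dcar (cont_dalg X)" "b \<in> dcar (cont_dalg X)" "c \<in> dcar (cont_dalg X)"
  show "dplus (cont_dalg X) (dplus (cont_dalg X) a b) c = dplus (cont_dalg X) a (dplus (cont_dalg X) b c)"
  proof (rule car_eqI[where X=X])
    fix x assume x: "x \<in> X"
    then show "dplus (cont_dalg X) (dplus (cont_dalg X) a b) c x = dplus (cont_dalg X) a (dplus (cont_dalg X) b c) x"
      using car_D(2,3)[OF \<open>a \<in> _\<close> x] car_D(2,3)[OF \<open>b \<in> _\<close> x] car_D(2,3)[OF \<open>c \<in> _\<close> x]
      by (simp add: pt_simps min_def)
  qed (simp add: out_simps)
next
  fix a b assume "a \<in> dcar (cont_dalg X)" "b \<in> dcar (cont_dalg X)"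
  show "dplus (cont_dalg X) a b = dplus (cont_dalg X) b a"
    by (rule car_eqI[where X=X]) (auto simp: pt_simps out_simps)
next
  fix a assume a: "a \<in> dcar (cont_dalg X)"
  show "dplus (cont_dalg X) a (dzero (cont_dalg X)) = a"
    by (rule car_eqI[where X=X]) (use car_D[OF a] in \<open>auto simp: pt_simps out_simps\<close>)
next
  fix a assume a: "a \<in> dcar (cont_dalg X)"
  show "dneg (cont_dalg X) (dneg (cont_dalg X) a) = a"
    by (rule car_eqI[where X=X]) (use car_D[OF a] in \<open>auto simp: pt_simps out_simps\<close>)
next
  fix a assume a: "a \<in> dcar (cont_dalg X)"
  show "dplus (cont_dalg X) a (dneg (cont_dalg X) (dzero (cont_dalg X))) = dneg (cont_dalg X) (dzero (cont_dalg X))"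
    by (rule car_eqI[where X=X]) (use car_D[OF a] in \<open>auto simp: pt_simps out_simps\<close>)
next
  fix a b assume a: "a \<in> dcar (cont_dalg X)" and b: "b \<in> dcar (cont_dalg X)"
  show "dplus (cont_dalg X) (dneg (cont_dalg X) (dplus (cont_dalg X) (dneg (cont_dalg X) a) b)) b =
        dplus (cont_dalg X) (dneg (cont_dalg X) (dplus (cont_dalg X) (dneg (cont_dalg X) b) a)) a"
  proof (rule car_eqI[where X=X])
    fix x assume x: "x \<in> X"
    show "dplus (cont_dalg X) (dneg (cont_dalg X) (dplus (cont_dalg X) (dneg (cont_dalg X) a) b)) b x =
        dplus (cont_dalg X) (dneg (cont_dalg X) (dplus (cont_dalg X) (dneg (cont_dalg X) b) a)) a x"
      using car_D(2,3)[OF a x] car_D(2,3)[OF b x] x by (simp add: pt_simps min_def)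
  qed (simp add: out_simps)
qed

lemma cd_delta_algebra: "delta_algebra (cont_dalg X)"
  unfolding delta_algebra_def
proof (intro conjI allI impI ballI)
  show "mv_algebra (cont_dalg X)" by (rule cd_mv)
next
  fix gs :: "nat \<Rightarrow> _" assume "\<forall>i. gs i \<in> dcar (cont_dalg X)"
  then show "ddelta (cont_dalg X) gs \<in> dcar (cont_dalg X)" by (intro delta_car) auto
next
  fix gs :: "nat \<Rightarrow> _" assume g: "\<forall>i. gs i \<in> dcar (cont_dalg X)"
  show "ddist (cont_dalg X) (ddelta (cont_dalg X) gs)
          (ddelta (cont_dalg X) (\<lambda>i. if i = 0 then gs 0 else dzero (cont_dalg X))) =
         ddelta (cont_dalg X) (\<lambda>i. if i = 0 then dzero (cont_dalg X) else gs i)"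
  proof (rule car_eqI[where X=X])
    fix x assume x: "x \<in> X"
    have e1: "(\<lambda>i. (if i = 0 then gs 0 else dzero (cont_dalg X)) x / 2 ^ Suc i) = (\<lambda>i. (if i = 0 then gs 0 x else 0) / 2 ^ Suc i)"
      by (auto simp: cd_simps)
    have e2: "(\<lambda>i. (if i = 0 then dzero (cont_dalg X) else gs i) x / 2 ^ Suc i) = (\<lambda>i. (if i = 0 then 0 else gs i x) / 2 ^ Suc i)"
      by (auto simp: cd_simps)
    have h: "(\<Sum>i. gs i x / 2^Suc i) = gs 0 x / 2 + (\<Sum>i. (if i = 0 then 0 else gs i x) / 2^Suc i)"
      by (rule dsum_head) (use dsum_car[OF _ x, of gs] g in auto)
    have nn: "0 \<le> (\<Sum>i. (if i = 0 then 0 else gs i x) / 2^Suc i)"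
      by (rule dsum_basic(2)) (use g car_D(2,3)[OF _ x] in auto)
    have nn': "(\<Sum>i. (if i = 0 then 0 else gs i x) / 2^Suc i) \<le> 1" 
      using h dsum_car(3)[OF _ x, of gs] g car_D(2)[OF _ x, of "gs 0"] by auto
    show "ddist (cont_dalg X) (ddelta (cont_dalg X) gs)
          (ddelta (cont_dalg X) (\<lambda>i. if i = 0 then gs 0 else dzero (cont_dalg X))) x =
         ddelta (cont_dalg X) (\<lambda>i. if i = 0 then dzero (cont_dalg X) else gs i) x"
      unfolding ddist_def pt_simps[OF x] e1 e2 dsum_single using nn nn' h
      by simp
  qed (simp add: out_simps ddist_def)
next
  fix gs :: "nat \<Rightarrow> _" assume g: "\<forall>i. gs i \<in> dcar (cont_dalg X)"
  show "dhalf (cont_dalg X) (ddelta (cont_dalg X) gs) = ddelta (cont_dalg X) (\<lambda>i. dhalf (cont_dalg X) (gs i))"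
  proof (rule car_eqI[where X=X])
    fix x assume x: "x \<in> X"
    have "(\<lambda>i. gs i x / 2^Suc i / 2) sums ((\<Sum>i. gs i x / 2^Suc i) / 2)"
      by (intro sums_divide summable_sums) (use dsum_car[OF _ x, of gs] g in auto)
    then show "dhalf (cont_dalg X) (ddelta (cont_dalg X) gs) x = ddelta (cont_dalg X) (\<lambda>i. dhalf (cont_dalg X) (gs i)) x"
      using x by (simp add: pt_simps sums_iff field_simps)
  qed (simp add: out_simps)
next
  fix a assume a: "a \<in> dcar (cont_dalg X)"
  show "ddelta (cont_dalg X) (\<lambda>i. a) = a"
    by (rule car_eqI[where X=X]) (use a in \<open>auto simp: pt_simps out_simps dsum_const[simplified] dest: car_D\<close>)
next
  fix gs :: "nat \<Rightarrow> _" assume g: "\<forall>i. gs i \<in> dcar (cont_dalg X)"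
  show "ddelta (cont_dalg X) (\<lambda>i. if i = 0 then dzero (cont_dalg X) else gs (i - 1)) = dhalf (cont_dalg X) (ddelta (cont_dalg X) gs)"
  proof (rule car_eqI[where X=X])
    fix x assume x: "x \<in> X"
    have e: "(\<lambda>i. (if i = 0 then dzero (cont_dalg X) else gs (i - 1)) x / 2 ^ Suc i) = (\<lambda>i. (if i = 0 then 0 else gs (i - 1) x) / 2 ^ Suc i)"
      by (auto simp: cd_simps)
    show "ddelta (cont_dalg X) (\<lambda>i. if i = 0 then dzero (cont_dalg X) else gs (i - 1)) x = dhalf (cont_dalg X) (ddelta (cont_dalg X) gs) x"
      using dsum_shift[of "\<lambda>i. gs i x"] dsum_car[OF _ x, of gs] g unfolding pt_simps[OF x] e by simp
  qed (simp add: out_simps)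
next
  fix gs hs :: "nat \<Rightarrow> _" assume g: "\<forall>i. gs i \<in> dcar (cont_dalg X)" and h: "\<forall>i. hs i \<in> dcar (cont_dalg X)"
  have gh: "\<forall>i. dplus (cont_dalg X) (gs i) (hs i) \<in> dcar (cont_dalg X)" using g h plus_car by blast
  show "dle (cont_dalg X) (ddelta (cont_dalg X) gs) (ddelta (cont_dalg X) (\<lambda>i. dplus (cont_dalg X) (gs i) (hs i)))"
    unfolding dle_def
  proof (rule car_eqI[where X=X])
    fix x assume x: "x \<in> X"
    have le: "(\<Sum>i. gs i x / 2^Suc i) \<le> (\<Sum>i. dplus (cont_dalg X) (gs i) (hs i) x / 2^Suc i)"
    proof (rule suminf_le)
      fix i show "gs i x / 2^Suc i \<le> dplus (cont_dalg X) (gs i) (hs i) x / 2^Suc i"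
        using car_D(2,3)[OF _ x, of "gs i"] car_D(2,3)[OF _ x, of "hs i"] g h x
        by (auto simp: pt_simps intro!: divide_right_mono)
    qed (use dsum_car(1)[OF _ x, of gs] dsum_car(1)[OF _ x, of "\<lambda>i. dplus (cont_dalg X) (gs i) (hs i)"] g gh in auto)
    show "djoin (cont_dalg X) (ddelta (cont_dalg X) gs) (ddelta (cont_dalg X) (\<lambda>i. dplus (cont_dalg X) (gs i) (hs i))) x =
          ddelta (cont_dalg X) (\<lambda>i. dplus (cont_dalg X) (gs i) (hs i)) x"
      using x le dsum_car(3)[OF _ x, of gs] dsum_car(3)[OF _ x, of "\<lambda>i. dplus (cont_dalg X) (gs i) (hs i)"] g gh
      by (subst pt_join) (auto simp: pt_simps)
  qed (simp add: out_simps)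
next
  fix a b assume "a \<in> dcar (cont_dalg X)" "b \<in> dcar (cont_dalg X)"
  show "dhalf (cont_dalg X) (dominus (cont_dalg X) a b) = dominus (cont_dalg X) (dhalf (cont_dalg X) a) (dhalf (cont_dalg X) b)"
    by (rule car_eqI[where X=X]) (auto simp: pt_simps out_simps max_def)
qed



context
  fixes A :: "'a dalg"
  assumes dA: "delta_algebra A"
begin

lemma A_mv: "mv_algebra A" using dA by (simp add: delta_algebra_def)

lemma A_zero: "dzero A \<in> dcar A" using A_mv by (simp add: mv_algebra_def)
lemma A_plus: "a \<in> dcar A \<Longrightarrow> b \<in> dcar A \<Longrightarrow> dplus A a b \<in> dcar A" using A_mv by (simp add: mv_algebra_def)
lemma A_neg: "a \<in> dcar A \<Longrightarrow> dneg A a \<in> dcar A" using A_mv by (simp add: mv_algebra_def)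
lemma A_comm: "a \<in> dcar A \<Longrightarrow> b \<in> dcar A \<Longrightarrow> dplus A a b = dplus A b a" using A_mv by (simp add: mv_algebra_def)
lemma A_unit: "a \<in> dcar A \<Longrightarrow> dplus A a (dzero A) = a" using A_mv by (simp add: mv_algebra_def)
lemma A_unit': "a \<in> dcar A \<Longrightarrow> dplus A (dzero A) a = a" using A_unit A_comm A_zero by metis
lemma A_delta: "(\<And>i. x i \<in> dcar A) \<Longrightarrow> ddelta A x \<in> dcar A" using dA by (simp add: delta_algebra_def)
lemma A_i: "(\<And>i. x i \<in> dcar A) \<Longrightarrow> ddist A (ddelta A x) (ddelta A (\<lambda>i. if i = 0 then x 0 else dzero A))
        = ddelta A (\<lambda>i. if i = 0 then dzero A else x i)" using dA by (simp add: delta_algebra_def)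
lemma A_iii: "a \<in> dcar A \<Longrightarrow> ddelta A (\<lambda>i. a) = a" using dA by (simp add: delta_algebra_def)
lemma A_iv: "(\<And>i. x i \<in> dcar A) \<Longrightarrow>
        ddelta A (\<lambda>i. if i = 0 then dzero A else x (i - 1)) = dhalf A (ddelta A x)" using dA by (simp add: delta_algebra_def)
lemma A_v: "(\<And>i. x i \<in> dcar A) \<Longrightarrow> (\<And>i. y i \<in> dcar A) \<Longrightarrow>
        dle A (ddelta A x) (ddelta A (\<lambda>i. dplus A (x i) (y i)))" using dA by (simp add: delta_algebra_def)

lemma A_ominus: "a \<in> dcar A \<Longrightarrow> b \<in> dcar A \<Longrightarrow> dominus A a b \<in> dcar A"
  unfolding dominus_def dodot_def by (intro A_neg A_plus) auto

lemma A_seq_if: "a \<in> dcar A \<Longrightarrow> b \<in> dcar A \<Longrightarrow> (\<forall>i. (if i = 0 then a else b) \<in> dcar A)" by auto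

context
  fixes h assumes hM: "h \<in> MaxSpec A"
begin

lemma h_range: "a \<in> dcar A \<Longrightarrow> 0 \<le> h a \<and> h a \<le> 1" using hM by (auto simp: MaxSpec_def)
lemma h_plus: "a \<in> dcar A \<Longrightarrow> b \<in> dcar A \<Longrightarrow> h (dplus A a b) = min 1 (h a + h b)" using hM by (auto simp: MaxSpec_def)
lemma h_neg: "a \<in> dcar A \<Longrightarrow> h (dneg A a) = 1 - h a" using hM by (auto simp: MaxSpec_def)
lemma h_zero: "h (dzero A) = 0" using hM by (auto simp: MaxSpec_def)

lemma h_ominus: "a \<in> dcar A \<Longrightarrow> b \<in> dcar A \<Longrightarrow> h (dominus A a b) = max 0 (h a - h b)"
  unfolding dominus_def dodot_def
  using h_range[of a] h_range[of b]
  by (simp add: h_neg h_plus A_neg A_plus min_def max_def)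

lemma h_dist: "a \<in> dcar A \<Longrightarrow> b \<in> dcar A \<Longrightarrow> h (ddist A a b) = \<bar>h a - h b\<bar>"
  unfolding ddist_def
  using h_range[of a] h_range[of b]
  by (simp add: h_ominus h_plus A_ominus min_def max_def abs_if)

lemma h_le: assumes "a \<in> dcar A" "b \<in> dcar A" "dle A a b" shows "h a \<le> h b"
proof -
  have "h (djoin A a b) = h b" using assms(3) by (simp add: dle_def)
  moreover have "h (djoin A a b) = max (h a) (h b)"
    unfolding djoin_def using h_range[OF assms(1)] h_range[OF assms(2)] assms
    by (simp add: h_neg h_plus A_neg A_plus min_def max_def)
  ultimately show ?thesis by simp
qed

lemma h_half: assumes y: "y \<in> dcar A" shows "h (dhalf A y) = h y / 2"
proof -
  have z: "dzero A \<in> dcar A" by (rule A_zero)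
  have s1: "(\<lambda>i. dplus A (if i = 0 then y else dzero A) (if i = 0 then dzero A else y)) = (\<lambda>i. y)"
    using y by (auto simp: A_unit A_unit')
  have p1: "\<And>i. (if i = 0 then y else dzero A) \<in> dcar A" using y z by auto
  have p2: "\<And>i. (if i = 0 then dzero A else y) \<in> dcar A" using y z by auto
  have "dle A (ddelta A (\<lambda>i. if i = 0 then y else dzero A)) (ddelta A (\<lambda>i. y))"
    using A_v[of "\<lambda>i. if i = 0 then y else dzero A" "\<lambda>i. if i = 0 then dzero A else y", OF p1 p2] by (simp only: s1)
  then have le: "h (dhalf A y) \<le> h y"
    using h_le[of "dhalf A y" y] A_iii[OF y] y z A_delta[of "\<lambda>i. if i = 0 then y else dzero A"]
    by (auto simp: dhalf_def)
  have "ddist A (ddelta A (\<lambda>i. y)) (ddelta A (\<lambda>i. if i = 0 then y else dzero A))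
        = ddelta A (\<lambda>i. if i = 0 then dzero A else y)" using A_i[of "\<lambda>i. y"] y by simp
  also have "ddelta A (\<lambda>i. if i = 0 then dzero A else y) = dhalf A (ddelta A (\<lambda>i. y))"
    using A_iv[of "\<lambda>i. y"] y by simp
  finally have "ddist A y (dhalf A y) = dhalf A y" using A_iii[OF y] by (simp add: dhalf_def)
  moreover have hy: "dhalf A y \<in> dcar A" unfolding dhalf_def using y z by (intro A_delta) auto
  ultimately have "\<bar>h y - h (dhalf A y)\<bar> = h (dhalf A y)" using h_dist[OF y hy] by simp
  with le show ?thesis by simp
qed

lemma h_step: assumes x: "\<And>i. x i \<in> dcar A"
  shows "h (ddelta A x) = h (x 0) / 2 + h (ddelta A (\<lambda>i. x (Suc i))) / 2"
proof -
  have z: "dzero A \<in> dcar A" by (rule A_zero)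
  have s1: "(\<lambda>i. dplus A (if i = 0 then x 0 else dzero A) (if i = 0 then dzero A else x i)) = x"
    using x by (auto simp: A_unit A_unit')
  have c1: "ddelta A (\<lambda>i. if i = 0 then x 0 else dzero A) \<in> dcar A" using x z by (intro A_delta) auto
  have c2: "ddelta A (\<lambda>i. if i = 0 then dzero A else x i) \<in> dcar A" using x z by (intro A_delta) auto
  have dx: "ddelta A x \<in> dcar A" using x by (rule A_delta)
  have p1: "\<And>i. (if i = 0 then x 0 else dzero A) \<in> dcar A" using x z by auto
  have p2: "\<And>i. (if i = 0 then dzero A else x i) \<in> dcar A" using x z by auto
  have "dle A (ddelta A (\<lambda>i. if i = 0 then x 0 else dzero A)) (ddelta A x)"
    using A_v[of "\<lambda>i. if i = 0 then x 0 else dzero A" "\<lambda>i. if i = 0 then dzero A else x i", OF p1 p2] by (simp only: s1)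
  then have le: "h (dhalf A (x 0)) \<le> h (ddelta A x)"
    using h_le[OF c1 dx] by (simp add: dhalf_def)
  have "\<bar>h (ddelta A x) - h (dhalf A (x 0))\<bar> = h (ddelta A (\<lambda>i. if i = 0 then dzero A else x i))"
    using A_i[of x, OF x] h_dist[OF dx c1] by (simp add: dhalf_def)
  also have "(\<lambda>i. if i = 0 then dzero A else x i) = (\<lambda>i. if i = 0 then dzero A else (\<lambda>i. x (Suc i)) (i - 1))"
    by auto
  also have "ddelta A \<dots> = dhalf A (ddelta A (\<lambda>i. x (Suc i)))" using A_iv[of "\<lambda>i. x (Suc i)"] x by simp
  finally have "\<bar>h (ddelta A x) - h (dhalf A (x 0))\<bar> = h (dhalf A (ddelta A (\<lambda>i. x (Suc i))))" .
  moreover have "ddelta A (\<lambda>i. x (Suc i)) \<in> dcar A" using x by (intro A_delta)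
  ultimately show ?thesis using le h_half[OF x[of 0]] h_half by auto
qed

lemma h_partial: assumes x: "\<And>i. x i \<in> dcar A"
  shows "h (ddelta A x) = (\<Sum>i<n. h (x i) / 2^Suc i) + h (ddelta A (\<lambda>i. x (i + n))) / 2^n"
proof (induction n)
  case 0 then show ?case by simp
next
  case (Suc n)
  have xs: "\<And>i. x (i + n) \<in> dcar A" using x by blast
  have e: "(\<lambda>i. (\<lambda>i. x (i + n)) (Suc i)) = (\<lambda>i. x (i + Suc n))" by simp
  have st: "h (ddelta A (\<lambda>i. x (i + n))) = h (x n) / 2 + h (ddelta A (\<lambda>i. x (i + Suc n))) / 2"
    using h_step[of "\<lambda>i. x (i + n)", OF xs] unfolding e by simp
  have "h (ddelta A x) = (\<Sum>i<n. h (x i) / 2^Suc i) + h (ddelta A (\<lambda>i. x (i + n))) / 2^n" by (rule Suc.IH)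
  also have "\<dots> = (\<Sum>i<n. h (x i) / 2^Suc i) + h (x n) / 2^Suc n + h (ddelta A (\<lambda>i. x (i + Suc n))) / 2^Suc n"
    unfolding st by (simp add: field_simps)
  finally show ?case by simp
qed

lemma h_delta: assumes x: "\<And>i. x i \<in> dcar A"
  shows "h (ddelta A x) = (\<Sum>i. h (x i) / 2^Suc i)"
proof -
  have "(\<lambda>n. h (ddelta A (\<lambda>i. x (i + n))) / 2^n) \<longlonglongrightarrow> 0"
  proof (rule Lim_null_comparison[OF _ LIMSEQ_divide_realpow_zero[of 2 1]])
    show "\<forall>\<^sub>F n in sequentially. norm (h (ddelta A (\<lambda>i. x (i + n))) / 2 ^ n) \<le> 1 / 2 ^ n"
    proof (intro always_eventually allI)
      fix n
      have "ddelta A (\<lambda>i. x (i + n)) \<in> dcar A" using x by (intro A_delta)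
      then have "0 \<le> h (ddelta A (\<lambda>i. x (i + n)))" "h (ddelta A (\<lambda>i. x (i + n))) \<le> 1"
        using h_range by auto
      then show "norm (h (ddelta A (\<lambda>i. x (i + n))) / 2 ^ n) \<le> 1 / 2 ^ n"
        by (simp add: divide_right_mono)
    qed
  qed simp
  then have "(\<lambda>n. h (ddelta A x) - h (ddelta A (\<lambda>i. x (i + n))) / 2^n) \<longlonglongrightarrow> h (ddelta A x) - 0"
    by (intro tendsto_diff tendsto_const)
  moreover have "(\<lambda>n. h (ddelta A x) - h (ddelta A (\<lambda>i. x (i + n))) / 2^n) = (\<lambda>n. \<Sum>i<n. h (x i) / 2^Suc i)"
  proof
    fix n show "h (ddelta A x) - h (ddelta A (\<lambda>i. x (i + n))) / 2^n = (\<Sum>i<n. h (x i) / 2^Suc i)"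
      using h_partial[of x n, OF x] by linarith
  qed
  ultimately have "(\<lambda>i. h (x i) / 2^Suc i) sums h (ddelta A x)"
    unfolding sums_def by simp
  then show ?thesis by (simp add: sums_iff)
qed

end

lemma MaxSpec_out: "h \<in> MaxSpec A \<Longrightarrow> a \<notin> dcar A \<Longrightarrow> h a = 0" by (simp add: MaxSpec_def)

lemma eta_car: assumes a: "a \<in> dcar A" shows "eta A a \<in> dcar (cont_dalg (MaxSpec A))"
proof (rule car_I)
  have "continuous_on (MaxSpec A) (\<lambda>h. h a)"
    by (rule continuous_on_subset[OF continuous_on_product_coordinates]) simp
  then show "continuous_on (MaxSpec A) (eta A a)"
    unfolding eta_def by (rule continuous_on_cong[THEN iffD2, OF refl, rotated]) auto
next
  fix h assume "h \<in> MaxSpec A"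
  then show "0 \<le> eta A a h \<and> eta A a h \<le> 1" using h_range[of h a] a by (simp add: eta_def)
next
  fix h assume "h \<notin> MaxSpec A"
  then show "eta A a h = 0" by (simp add: eta_def)
qed

lemma eta_hom: "delta_hom A (cont_dalg (MaxSpec A)) (eta A)"
  unfolding delta_hom_def
proof (intro conjI ballI allI impI)
  fix a assume "a \<in> dcar A" then show "eta A a \<in> dcar (cont_dalg (MaxSpec A))" by (rule eta_car)
next
  fix a b assume ab: "a \<in> dcar A" "b \<in> dcar A"
  show "eta A (dplus A a b) = dplus (cont_dalg (MaxSpec A)) (eta A a) (eta A b)"
  proof
    fix h show "eta A (dplus A a b) h = dplus (cont_dalg (MaxSpec A)) (eta A a) (eta A b) h"
      using h_plus[of h a b] ab by (simp add: eta_def cd_simps)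
  qed
next
  fix a assume a: "a \<in> dcar A"
  show "eta A (dneg A a) = dneg (cont_dalg (MaxSpec A)) (eta A a)"
  proof
    fix h show "eta A (dneg A a) h = dneg (cont_dalg (MaxSpec A)) (eta A a) h"
      using h_neg[of h a] a by (simp add: eta_def cd_simps)
  qed
next
  show "eta A (dzero A) = dzero (cont_dalg (MaxSpec A))"
  proof
    fix h show "eta A (dzero A) h = dzero (cont_dalg (MaxSpec A)) h"
      using h_zero[of h] by (simp add: eta_def cd_simps)
  qed
next
  fix x :: "nat \<Rightarrow> 'a" assume x: "\<forall>i. x i \<in> dcar A"
  show "eta A (ddelta A x) = ddelta (cont_dalg (MaxSpec A)) (\<lambda>i. eta A (x i))"
  proof
    fix h show "eta A (ddelta A x) h = ddelta (cont_dalg (MaxSpec A)) (\<lambda>i. eta A (x i)) h"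
    proof (cases "h \<in> MaxSpec A")
      case True
      then show ?thesis using h_delta[of h x] x by (simp add: eta_def cd_simps)
    qed (simp add: eta_def cd_simps)
  qed
qed

end



lemma coord_cont: "continuous_on UNIV (\<lambda>h::'a \<Rightarrow> real. h a)"
  by simp

lemma compact_MaxSpec: "compact (MaxSpec A)"
proof -
  define K :: "('a \<Rightarrow> real) set" where "K = PiE UNIV (\<lambda>_. {0..1})"
  have "compactin (product_topology (\<lambda>_. euclidean) UNIV) K"
    unfolding K_def by (subst compactin_PiE) auto
  then have cK: "compact K" by (simp add: euclidean_product_topology)
  define T1 where "T1 = {h::'a\<Rightarrow>real. \<forall>a. \<forall>b. a \<in> dcar A \<longrightarrow> b \<in> dcar A \<longrightarrow> h (dplus A a b) = min 1 (h a + h b)}"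
  define T2 where "T2 = {h::'a\<Rightarrow>real. \<forall>a. a \<in> dcar A \<longrightarrow> h (dneg A a) = 1 - h a}"
  define T3 where "T3 = {h::'a\<Rightarrow>real. h (dzero A) = 0}"
  define T4 where "T4 = {h::'a\<Rightarrow>real. \<forall>a. a \<notin> dcar A \<longrightarrow> h a = 0}"
  have c1: "closed T1" unfolding T1_def
  proof (intro closed_Collect_all)
    fix a b
    show "closed {h::'a\<Rightarrow>real. a \<in> dcar A \<longrightarrow> b \<in> dcar A \<longrightarrow> h (dplus A a b) = min 1 (h a + h b)}"
    proof (cases "a \<in> dcar A \<and> b \<in> dcar A")
      case True
      have "closed {h::'a\<Rightarrow>real. h (dplus A a b) = min 1 (h a + h b)}"
        by (intro closed_Collect_eq coord_cont continuous_on_min continuous_on_add continuous_on_const)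
      then show ?thesis using True by simp
    qed auto
  qed
  have c2: "closed T2" unfolding T2_def
  proof (intro closed_Collect_all)
    fix a
    show "closed {h::'a\<Rightarrow>real. a \<in> dcar A \<longrightarrow> h (dneg A a) = 1 - h a}"
    proof (cases "a \<in> dcar A")
      case True
      have "closed {h::'a\<Rightarrow>real. h (dneg A a) = 1 - h a}"
        by (intro closed_Collect_eq coord_cont continuous_on_diff continuous_on_const)
      then show ?thesis using True by simp
    qed auto
  qed
  have c3: "closed T3" unfolding T3_def
    by (intro closed_Collect_eq coord_cont continuous_on_const)
  have c4: "closed T4" unfolding T4_def
  proof (intro closed_Collect_all)
    fix a
    show "closed {h::'a\<Rightarrow>real. a \<notin> dcar A \<longrightarrow> h a = 0}"
    proof (cases "a \<in> dcar A")
      case False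
      have "closed {h::'a\<Rightarrow>real. h a = 0}"
        by (intro closed_Collect_eq coord_cont continuous_on_const)
      then show ?thesis using False by simp
    qed auto
  qed
  have "MaxSpec A = K \<inter> (T1 \<inter> T2 \<inter> T3 \<inter> T4)"
    unfolding MaxSpec_def K_def T1_def T2_def T3_def T4_def by (auto simp: PiE_iff)
  then show ?thesis using cK c1 c2 c3 c4 by auto
qed



fun brem :: "real \<Rightarrow> nat \<Rightarrow> real" where
  "brem r 0 = r"
| "brem r (Suc n) = 2 * brem r n - (if brem r n \<ge> 1/2 then 1 else 0)"

definition bbit :: "real \<Rightarrow> nat \<Rightarrow> bool" where "bbit r n \<longleftrightarrow> brem r n \<ge> 1/2"

lemma brem_range: "0 \<le> r \<Longrightarrow> r \<le> 1 \<Longrightarrow> 0 \<le> brem r n \<and> brem r n \<le> 1"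
  by (induction n) auto

lemma brem_partial: "r = (\<Sum>i<n. (if bbit r i then 1 else 0) / 2^Suc i) + brem r n / 2^n"
proof (induction n)
  case 0 then show ?case by simp
next
  case (Suc n)
  have "brem r n / 2^n = (if bbit r n then 1 else 0) / 2^Suc n + brem r (Suc n) / 2^Suc n"
    by (simp add: bbit_def field_simps)
  with Suc show ?case by simp
qed

lemma bbit_sums: assumes "0 \<le> r" "r \<le> 1"
  shows "(\<lambda>i. (if bbit r i then 1 else 0) / 2^Suc i) sums r"
proof -
  have "(\<lambda>n. brem r n / 2^n) \<longlonglongrightarrow> 0"
  proof (rule Lim_null_comparison[OF _ LIMSEQ_divide_realpow_zero[of 2 1]])
    show "\<forall>\<^sub>F n in sequentially. norm (brem r n / 2 ^ n) \<le> 1 / 2 ^ n"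
    proof (intro always_eventually allI)
      fix n show "norm (brem r n / 2 ^ n) \<le> 1 / 2 ^ n"
        using brem_range[OF assms, of n] by (simp add: divide_right_mono)
    qed
  qed simp
  then have "(\<lambda>n. r - brem r n / 2^n) \<longlonglongrightarrow> r - 0" by (intro tendsto_diff tendsto_const)
  moreover have "(\<lambda>n. r - brem r n / 2^n) = (\<lambda>n. \<Sum>i<n. (if bbit r i then 1 else 0) / 2^Suc i)"
  proof
    fix n show "r - brem r n / 2^n = (\<Sum>i<n. (if bbit r i then 1 else 0) / 2^Suc i)"
      using brem_partial[of r n] by linarith
  qed
  ultimately show ?thesis unfolding sums_def by simp
qed

primrec nmul :: "('x \<Rightarrow> real) dalg \<Rightarrow> nat \<Rightarrow> ('x \<Rightarrow> real) \<Rightarrow> ('x \<Rightarrow> real)" where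
  "nmul C 0 t = dzero C"
| "nmul C (Suc k) t = dplus C t (nmul C k t)"

definition smul :: "('x \<Rightarrow> real) dalg \<Rightarrow> real \<Rightarrow> ('x \<Rightarrow> real) \<Rightarrow> ('x \<Rightarrow> real)" where
  "smul C r t = ddelta C (\<lambda>i. if bbit r i then t else dzero C)"

definition dmin :: "('x \<Rightarrow> real) dalg \<Rightarrow> ('x \<Rightarrow> real) \<Rightarrow> ('x \<Rightarrow> real) \<Rightarrow> ('x \<Rightarrow> real)" where
  "dmin C a b = dominus C a (dominus C a b)"

definition dmax :: "('x \<Rightarrow> real) dalg \<Rightarrow> ('x \<Rightarrow> real) \<Rightarrow> ('x \<Rightarrow> real) \<Rightarrow> ('x \<Rightarrow> real)" where
  "dmax C a b = dplus C a (dominus C b a)"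

lemma nmul_pt: "x \<in> X \<Longrightarrow> 0 \<le> t x \<Longrightarrow> nmul (cont_dalg X) k t x = min 1 (real k * t x)"
proof (induction k)
  case 0 then show ?case by (simp add: pt_simps)
next
  case (Suc k)
  then show ?case by (simp add: pt_simps min_def algebra_simps)
qed

lemma smul_pt: "x \<in> X \<Longrightarrow> 0 \<le> r \<Longrightarrow> r \<le> 1 \<Longrightarrow> smul (cont_dalg X) r t x = r * t x"
proof -
  assume x: "x \<in> X" and r: "0 \<le> r" "r \<le> 1"
  have "(\<lambda>i. t x * ((if bbit r i then 1 else 0) / 2^Suc i)) sums (t x * r)"
    by (rule sums_mult[OF bbit_sums[OF r]])
  moreover have "(\<lambda>i. (if bbit r i then t else dzero (cont_dalg X)) x / 2 ^ Suc i) = (\<lambda>i. t x * ((if bbit r i then 1 else 0) / 2^Suc i))"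
    by (auto simp: cd_simps)
  ultimately show ?thesis unfolding smul_def pt_simps[OF x] by (simp add: sums_iff mult.commute)
qed

lemma dmin_pt: "x \<in> X \<Longrightarrow> 0 \<le> a x \<Longrightarrow> 0 \<le> b x \<Longrightarrow> dmin (cont_dalg X) a b x = min (a x) (b x)"
  by (simp add: dmin_def pt_simps max_def min_def)

lemma dmax_pt: "x \<in> X \<Longrightarrow> a x \<le> 1 \<Longrightarrow> b x \<le> 1 \<Longrightarrow> dmax (cont_dalg X) a b x = max (a x) (b x)"
  by (simp add: dmax_def pt_simps)

locale Esub =
  fixes X :: "'x::topological_space set" and E :: "('x \<Rightarrow> real) set"
  assumes E_car: "E \<subseteq> dcar (cont_dalg X)"
    and E_zero: "dzero (cont_dalg X) \<in> E"
    and E_plus: "\<And>a b. a \<in> E \<Longrightarrow> b \<in> E \<Longrightarrow> dplus (cont_dalg X) a b \<in> E"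
    and E_neg: "\<And>a. a \<in> E \<Longrightarrow> dneg (cont_dalg X) a \<in> E"
    and E_delta: "\<And>gs. (\<And>i. gs i \<in> E) \<Longrightarrow> ddelta (cont_dalg X) gs \<in> E"
begin

abbreviation "C \<equiv> cont_dalg X"

lemma E_range: "a \<in> E \<Longrightarrow> x \<in> X \<Longrightarrow> 0 \<le> a x \<and> a x \<le> 1"
  using E_car car_D by blast

lemma E_ominus: "a \<in> E \<Longrightarrow> b \<in> E \<Longrightarrow> dominus C a b \<in> E"
  unfolding dominus_def dodot_def by (intro E_neg E_plus) auto

lemma E_half: "a \<in> E \<Longrightarrow> dhalf C a \<in> E"
  unfolding dhalf_def by (intro E_delta) (auto simp: E_zero)

lemma E_nmul: "a \<in> E \<Longrightarrow> nmul C k a \<in> E"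
  by (induction k) (auto simp: E_zero E_plus)

lemma E_smul: "a \<in> E \<Longrightarrow> smul C r a \<in> E"
  unfolding smul_def by (intro E_delta) (auto simp: E_zero)

lemma E_dmin: "a \<in> E \<Longrightarrow> b \<in> E \<Longrightarrow> dmin C a b \<in> E"
  unfolding dmin_def by (intro E_ominus)

lemma E_dmax: "a \<in> E \<Longrightarrow> b \<in> E \<Longrightarrow> dmax C a b \<in> E"
  unfolding dmax_def by (intro E_ominus E_plus)

lemma E_one: "dneg C (dzero C) \<in> E" by (intro E_neg E_zero)

lemma E_const: assumes "0 \<le> c" "c \<le> 1" shows "\<exists>w\<in>E. \<forall>x\<in>X. w x = c"
proof (intro bexI ballI)
  fix x assume x: "x \<in> X"
  show "smul C c (dneg C (dzero C)) x = c" using smul_pt[OF x assms] x by (simp add: pt_simps)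
qed (intro E_smul E_one)

end



locale Esep = Esub +
  assumes cX: "compact X"
    and sep: "\<And>x y. x \<in> X \<Longrightarrow> y \<in> X \<Longrightarrow> x \<noteq> y \<Longrightarrow> \<exists>t\<in>E. t x \<noteq> t y"
begin

lemma sep_lt: assumes "x \<in> X" "y \<in> X" "x \<noteq> y" shows "\<exists>t\<in>E. t x < t y"
proof -
  obtain t where t: "t \<in> E" "t x \<noteq> t y" using sep[OF assms] by blast
  show ?thesis
  proof (cases "t x < t y")
    case True then show ?thesis using t by blast
  next
    case False
    then have "dneg C t x < dneg C t y" using t assms by (simp add: pt_simps)
    then show ?thesis using E_neg[OF t(1)] by blast
  qed
qed

lemma interp:
  assumes x: "x \<in> X" and y: "y \<in> X" and ab: "0 \<le> \<alpha>" "\<alpha> \<le> 1" "0 \<le> \<beta>" "\<beta> \<le> 1"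
    and False: "x \<noteq> y"
  shows "\<exists>w\<in>E. w x = \<alpha> \<and> w y = \<beta>"
proof -
  obtain t where t: "t \<in> E" "t x < t y" using sep_lt[OF x y False] by blast
  define p where "p = t x"
  have p: "0 \<le> p" "p \<le> 1" using E_range[OF t(1) x] by (auto simp: p_def)
  obtain c where c: "c \<in> E" "\<And>z. z \<in> X \<Longrightarrow> c z = p" using E_const[OF p] by blast
  define s where "s = dominus C t c"
  have s: "s \<in> E" unfolding s_def by (intro E_ominus t c)
  have sx: "s x = 0" using x c(2)[OF x] by (simp add: s_def pt_simps p_def)
  have sy: "s y = t y - p" using y c(2)[OF y] t(2) by (simp add: s_def pt_simps p_def)
  obtain N :: nat where N: "1 / (t y - p) < real N" using reals_Archimedean2 by blast
  define z where "z = nmul C N s"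
  have z: "z \<in> E" unfolding z_def by (intro E_nmul s)
  have zx: "z x = 0" unfolding z_def using nmul_pt[OF x, of s N] sx by simp
  have "1 \<le> real N * (t y - p)" using N t(2) by (simp add: p_def field_simps)
  then have zy: "z y = 1" unfolding z_def using nmul_pt[OF y, of s N] sy t(2) by (simp add: p_def)
  define w where "w = dplus C (smul C \<beta> z) (smul C \<alpha> (dneg C z))"
  have "w \<in> E" unfolding w_def by (intro E_plus E_smul E_neg z)
  moreover have "w x = \<alpha>" unfolding w_def using x zx ab
    by (simp add: pt_simps smul_pt[OF x])
  moreover have "w y = \<beta>" unfolding w_def using y zy ab
    by (simp add: pt_simps smul_pt[OF y])
  ultimately show ?thesis by blast
qed

lemma interp2:
  assumes x: "x \<in> X" and y: "y \<in> X" and u: "u \<in> dcar C"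
  shows "\<exists>w\<in>E. w x = u x \<and> w y = u y"
proof (cases "x = y")
  case True
  obtain c where "c \<in> E" "\<And>z. z \<in> X \<Longrightarrow> c z = u x" using E_const car_D(2,3)[OF u x] by blast
  then show ?thesis using True x by auto
next
  case False
  then show ?thesis using interp[OF x y _ _ _ _ False] car_D(2,3)[OF u x] car_D(2,3)[OF u y] by blast
qed

lemma fin_min:
  assumes "finite F" "F \<noteq> {}" "\<And>y. y \<in> F \<Longrightarrow> W y \<in> E"
  shows "\<exists>v\<in>E. \<forall>z\<in>X. v z = Min ((\<lambda>y. W y z) ` F)"
  using assms
proof (induction F rule: finite_ne_induct)
  case (singleton y) then show ?case by auto
next
  case (insert y F)
  obtain v where v: "v \<in> E" "\<forall>z\<in>X. v z = Min ((\<lambda>y. W y z) ` F)" using insert by auto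
  have wy: "W y \<in> E" using insert by auto
  show ?case
  proof (intro bexI ballI)
    fix z assume z: "z \<in> X"
    show "dmin C (W y) v z = Min ((\<lambda>y. W y z) ` insert y F)"
      using dmin_pt[OF z, of "W y" v] E_range[OF wy z] E_range[OF v(1) z] v(2) z insert(1,2)
      by simp
  qed (intro E_dmin wy v(1))
qed

lemma fin_max:
  assumes "finite F" "F \<noteq> {}" "\<And>y. y \<in> F \<Longrightarrow> W y \<in> E"
  shows "\<exists>v\<in>E. \<forall>z\<in>X. v z = Max ((\<lambda>y. W y z) ` F)"
  using assms
proof (induction F rule: finite_ne_induct)
  case (singleton y) then show ?case by auto
next
  case (insert y F)
  obtain v where v: "v \<in> E" "\<forall>z\<in>X. v z = Max ((\<lambda>y. W y z) ` F)" using insert by auto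
  have wy: "W y \<in> E" using insert by auto
  show ?case
  proof (intro bexI ballI)
    fix z assume z: "z \<in> X"
    show "dmax C (W y) v z = Max ((\<lambda>y. W y z) ` insert y F)"
      using dmax_pt[OF z, of "W y" v] E_range[OF wy z] E_range[OF v(1) z] v(2) z insert(1,2)
      by simp
  qed (intro E_dmax wy v(1))
qed

lemma open_piece:
  fixes g :: "_ \<Rightarrow> real"
  assumes "continuous_on X g"
  shows "\<exists>Op. open Op \<and> Op \<inter> X = {z\<in>X. g z < e}"
proof -
  have "\<exists>A. open A \<and> A \<inter> X = g -` {..<e} \<inter> X"
    using continuous_on_open_invariant[THEN iffD1, OF assms, rule_format, OF open_lessThan] .
  then obtain Op where "open Op" "Op \<inter> X = g -` {..<e} \<inter> X" by blast
  then show ?thesis by (intro exI[of _ Op]) auto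
qed

lemma stepA:
  assumes u: "u \<in> dcar C" and e: "0 < e" and x: "x \<in> X"
  shows "\<exists>v\<in>E. (\<forall>z\<in>X. v z < u z + e) \<and> u x - e < v x"
proof -
  define W where "W y = (SOME w. w \<in> E \<and> w x = u x \<and> w y = u y)" for y
  have W: "W y \<in> E \<and> W y x = u x \<and> W y y = u y" if "y \<in> X" for y
    unfolding W_def by (rule someI_ex[where P="\<lambda>w. w \<in> E \<and> w x = u x \<and> w y = u y"]) (use interp2[OF x that u] in blast)
  have ex: "\<exists>Op. open Op \<and> Op \<inter> X = {z\<in>X. W y z - u z < e}" if "y \<in> X" for y
  proof (rule open_piece)
    show "continuous_on X (\<lambda>z. W y z - u z)"
      using car_D(1)[OF u] car_D(1) E_car W[OF that] by (intro continuous_intros) auto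
  qed
  define Op where "Op y = (SOME Op. open Op \<and> Op \<inter> X = {z\<in>X. W y z - u z < e})" for y
  have Op: "open (Op y) \<and> Op y \<inter> X = {z\<in>X. W y z - u z < e}" if "y \<in> X" for y
    unfolding Op_def by (rule someI_ex[where P="\<lambda>Op. open Op \<and> Op \<inter> X = {z\<in>X. W y z - u z < e}"]) (rule ex[OF that])
  have cover: "X \<subseteq> (\<Union>y\<in>X. Op y)"
  proof
    fix y assume y: "y \<in> X"
    then have "y \<in> Op y \<inter> X" using Op[OF y] W[OF y] e by auto
    then show "y \<in> (\<Union>y\<in>X. Op y)" using y by auto
  qed
  obtain F where F: "F \<subseteq> X" "finite F" "X \<subseteq> (\<Union>y\<in>F. Op y)"
    using compactE_image[OF cX _ cover] Op by blast
  have Fne: "F \<noteq> {}" using F(3) x by auto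
  obtain v where v: "v \<in> E" "\<forall>z\<in>X. v z = Min ((\<lambda>y. W y z) ` F)"
    using fin_min[OF F(2) Fne, of W] W F(1) by blast
  have "(\<lambda>y. W y x) ` F = {u x}"
  proof
    show "(\<lambda>y. W y x) ` F \<subseteq> {u x}" using W F(1) by auto
    obtain y0 where "y0 \<in> F" using Fne by auto
    then show "{u x} \<subseteq> (\<lambda>y. W y x) ` F" using W[of y0] F(1) by force
  qed
  then have vx: "v x = u x" using v(2) x by simp
  have "v z < u z + e" if z: "z \<in> X" for z
  proof -
    obtain y where y: "y \<in> F" "z \<in> Op y" using F(3) z by auto
    then have "W y z - u z < e" using Op[of y] F(1) z by auto
    moreover have "v z \<le> W y z" using v(2) z y(1) F(2) by simp
    ultimately show ?thesis by simp
  qed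
  then show ?thesis using v(1) vx e by (intro bexI[of _ v]) auto
qed

lemma approx:
  assumes u: "u \<in> dcar C" and e: "0 < e"
  shows "\<exists>w\<in>E. \<forall>z\<in>X. \<bar>w z - u z\<bar> < e"
proof (cases "X = {}")
  case True then show ?thesis using E_zero by auto
next
  case False
  define V where "V x = (SOME v. v \<in> E \<and> (\<forall>z\<in>X. v z < u z + e) \<and> u x - e < v x)" for x
  have V: "V x \<in> E \<and> (\<forall>z\<in>X. V x z < u z + e) \<and> u x - e < V x x" if "x \<in> X" for x
    unfolding V_def by (rule someI_ex[where P="\<lambda>v. v \<in> E \<and> (\<forall>z\<in>X. v z < u z + e) \<and> u x - e < v x"]) (use stepA[OF u e that] in blast)
  have ex: "\<exists>Op. open Op \<and> Op \<inter> X = {z\<in>X. u z - V x z < e}" if "x \<in> X" for x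
  proof (rule open_piece)
    show "continuous_on X (\<lambda>z. u z - V x z)"
      using car_D(1)[OF u] car_D(1) E_car V[OF that] by (intro continuous_intros) auto
  qed
  define Op where "Op x = (SOME Op. open Op \<and> Op \<inter> X = {z\<in>X. u z - V x z < e})" for x
  have Op: "open (Op x) \<and> Op x \<inter> X = {z\<in>X. u z - V x z < e}" if "x \<in> X" for x
    unfolding Op_def by (rule someI_ex[where P="\<lambda>Op. open Op \<and> Op \<inter> X = {z\<in>X. u z - V x z < e}"]) (rule ex[OF that])
  have cover: "X \<subseteq> (\<Union>x\<in>X. Op x)"
  proof
    fix x assume x: "x \<in> X"
    then have "x \<in> Op x \<inter> X" using Op[OF x] V[OF x] by auto
    then show "x \<in> (\<Union>x\<in>X. Op x)" using x by auto
  qed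
  obtain G where G: "G \<subseteq> X" "finite G" "X \<subseteq> (\<Union>x\<in>G. Op x)"
    using compactE_image[OF cX _ cover] Op by blast
  have Gne: "G \<noteq> {}" using G(3) False by auto
  obtain w where w: "w \<in> E" "\<forall>z\<in>X. w z = Max ((\<lambda>x. V x z) ` G)"
    using fin_max[OF G(2) Gne, of V] V G(1) by blast
  have "\<bar>w z - u z\<bar> < e" if z: "z \<in> X" for z
  proof -
    obtain x where x: "x \<in> G" "z \<in> Op x" using G(3) z by auto
    then have "u z - V x z < e" using Op[of x] G(1) z by auto
    moreover have "V x z \<le> w z" using w(2) z x(1) G(2) by simp
    moreover have "w z < u z + e"
    proof -
      have "w z \<in> (\<lambda>x. V x z) ` G" using w(2) z G(2) Gne by simp
      then obtain x' where "x' \<in> G" "w z = V x' z" by auto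
      then show ?thesis using V[of x'] G(1) z by auto
    qed
    ultimately show ?thesis by linarith
  qed
  then show ?thesis using w(1) by blast
qed

end



context Esub
begin

lemma uclosed:
  assumes u: "u \<in> dcar C"
    and ap: "\<And>e. 0 < e \<Longrightarrow> \<exists>w\<in>E. \<forall>z\<in>X. \<bar>w z - u z\<bar> < e"
  shows "u \<in> E"
proof -
  define w where "w n = (SOME w. w \<in> E \<and> (\<forall>z\<in>X. \<bar>w z - u z\<bar> < (1/2)^(n+3)))" for n :: nat
  have w: "w n \<in> E \<and> (\<forall>z\<in>X. \<bar>w n z - u z\<bar> < (1/2)^(n+3))" for n
    unfolding w_def by (rule someI_ex[where P="\<lambda>w. w \<in> E \<and> (\<forall>z\<in>X. \<bar>w z - u z\<bar> < (1/2)^(n+3))"])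
      (use ap[of "(1/2)^(n+3)"] in auto)
  define a where "a n = dominus C (w (Suc n)) (w n)" for n
  define b where "b n = dominus C (w n) (w (Suc n))" for n
  define m where "m n = nmul C (2^(n+1)) (a n)" for n
  define m' where "m' n = nmul C (2^(n+1)) (b n)" for n
  have aE: "a n \<in> E" "b n \<in> E" for n unfolding a_def b_def using w by (auto intro: E_ominus)
  have mE: "m n \<in> E" "m' n \<in> E" for n unfolding m_def m'_def using aE by (auto intro: E_nmul)
  define P where "P = ddelta C m"
  define N where "N = ddelta C m'"
  have PE: "P \<in> E" "N \<in> E" unfolding P_def N_def using mE by (auto intro: E_delta)
  define q where "q = dominus C (dplus C (dhalf C (w 0)) (dhalf C P)) (dhalf C N)"
  have qE: "q \<in> E" unfolding q_def using PE w by (intro E_ominus E_plus E_half) auto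
  have "u = dplus C q q"
  proof (rule car_eqI[where X=X])
    fix x assume x: "x \<notin> X"
    then show "u x = dplus C q q x" using car_D(4)[OF u x] by (simp add: out_simps)
  next
    fix x assume x: "x \<in> X"
    have d: "\<bar>w (Suc n) x - w n x\<bar> \<le> (1/2)^(n+2)" for n
    proof -
      have "\<bar>w (Suc n) x - u x\<bar> < (1/2)^(n+4)" "\<bar>w n x - u x\<bar> < (1/2)^(n+3)"
        using w[of n] w[of "Suc n"] x by (auto simp: add.commute)
      moreover have "(1/2::real)^(n+4) + (1/2)^(n+3) \<le> (1/2)^(n+2)"
      proof -
        have "(1/2::real)^(n+4) + (1/2)^(n+3) = (1/2)^n * (3/16)" "(1/2::real)^(n+2) = (1/2)^n * (4/16)"
          by (simp_all add: power_add eval_nat_numeral)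
        moreover have "0 \<le> (1/2::real)^n" by simp
        ultimately show ?thesis by linarith
      qed
      ultimately show ?thesis by linarith
    qed
    have ax: "a n x = max 0 (w (Suc n) x - w n x)" "b n x = max 0 (w n x - w (Suc n) x)" for n
      unfolding a_def b_def using x by (simp_all add: pt_simps)
    have mx: "m n x / 2^Suc n = a n x" "m' n x / 2^Suc n = b n x" for n
    proof -
      have "(2::real)^(n+1) * (1/2)^(n+2) = 1/2" by (simp add: power_add power_divide)
      note h = this
      have ab: "a n x \<le> (1/2)^(n+2)" "b n x \<le> (1/2)^(n+2)" "0 \<le> a n x" "0 \<le> b n x"
      proof -
        have t: "\<bar>w (Suc n) x - w n x\<bar> \<le> (1/2)^(n+2)" by (rule d)
        have z: "0 \<le> (1/2::real)^(n+2)" by simp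
        show "a n x \<le> (1/2)^(n+2)" "b n x \<le> (1/2)^(n+2)" "0 \<le> a n x" "0 \<le> b n x"
          unfolding ax using t z by arith+
      qed
      have le: "(2::real)^(n+1) * (a n x) \<le> 1" "(2::real)^(n+1) * (b n x) \<le> 1"
      proof -
        have "(2::real)^(n+1) * a n x \<le> 2^(n+1) * (1/2)^(n+2)" by (rule mult_left_mono[OF ab(1)]) simp
        moreover have "(2::real)^(n+1) * b n x \<le> 2^(n+1) * (1/2)^(n+2)" by (rule mult_left_mono[OF ab(2)]) simp
        ultimately show "(2::real)^(n+1) * (a n x) \<le> 1" "(2::real)^(n+1) * (b n x) \<le> 1"
          unfolding h by linarith+
      qed
      show "m n x / 2^Suc n = a n x" "m' n x / 2^Suc n = b n x"
        unfolding m_def m'_def using nmul_pt[OF x, of "a n" "2^(n+1)"] nmul_pt[OF x, of "b n" "2^(n+1)"] le ab(3,4)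
        by simp_all
    qed
    have sa: "summable (\<lambda>n. m n x / 2^Suc n)" "summable (\<lambda>n. m' n x / 2^Suc n)"
    proof -
      have "\<And>i. m i \<in> dcar C" "\<And>i. m' i \<in> dcar C" using mE E_car by auto
      then show "summable (\<lambda>n. m n x / 2^Suc n)" "summable (\<lambda>n. m' n x / 2^Suc n)"
        using dsum_car(1)[OF _ x, of m] dsum_car(1)[OF _ x, of m'] by blast+
    qed
    have Px: "P x = (\<Sum>n. a n x)" "N x = (\<Sum>n. b n x)"
      unfolding P_def N_def pt_simps[OF x] mx by simp_all
    have sa': "summable (\<lambda>n. a n x)" "summable (\<lambda>n. b n x)" using sa unfolding mx .
    have conv: "(\<lambda>n. w n x) \<longlonglongrightarrow> u x"
    proof (rule LIMSEQ_I)
      fix r :: real assume r: "0 < r"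
      obtain n0 where n0: "(1/2::real)^n0 < r" using real_arch_pow_inv[OF r, of "1/2"] by auto
      show "\<exists>no. \<forall>n\<ge>no. norm (w n x - u x) < r"
      proof (intro exI allI impI)
        fix n assume "n0 \<le> n"
        then have "(1/2::real)^(n+3) \<le> (1/2)^n0" by (intro power_decreasing) auto
        moreover have "\<bar>w n x - u x\<bar> < (1/2)^(n+3)" using w[of n] x by auto
        ultimately show "norm (w n x - u x) < r" using n0 unfolding real_norm_def by linarith
      qed
    qed
    have "(\<lambda>n. w (Suc n) x - w n x) sums (u x - w 0 x)" by (rule telescope_sums[OF conv])
    moreover have "(\<lambda>n. w (Suc n) x - w n x) = (\<lambda>n. a n x - b n x)" unfolding ax by (auto simp: max_def)
    ultimately have "(\<lambda>n. a n x - b n x) sums (u x - w 0 x)" by simp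
    moreover have "(\<lambda>n. a n x - b n x) sums (P x - N x)" unfolding Px by (intro sums_diff summable_sums sa')
    ultimately have PN: "P x - N x = u x - w 0 x" using sums_unique2 by blast
    have Pr: "0 \<le> P x" "P x \<le> 1" "0 \<le> N x" using E_range[OF PE(1) x] E_range[OF PE(2) x] by auto
    have wr: "0 \<le> w 0 x" "w 0 x \<le> 1" using E_range[of "w 0" x] w x by auto
    have ur: "0 \<le> u x" "u x \<le> 1" using car_D(2,3)[OF u x] by auto
    have "q x = u x / 2" unfolding q_def using x Pr wr PN ur by (simp add: pt_simps max_def min_def)
    then show "u x = dplus C q q x" using x ur by (simp add: pt_simps)
  qed
  then show ?thesis using qE E_plus by simp
qed

end



lemma Esep_dense: "Esep X E \<Longrightarrow> E = dcar (cont_dalg X)"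
proof -
  assume "Esep X E"
  then interpret Esep X E .
  show ?thesis
  proof
    show "E \<subseteq> dcar (cont_dalg X)" by (rule E_car)
    show "dcar (cont_dalg X) \<subseteq> E"
    proof
      fix u assume u: "u \<in> dcar (cont_dalg X)"
      show "u \<in> E" by (rule uclosed[OF u approx[OF u]])
    qed
  qed
qed

theorem mainTheorem8:
  fixes A :: "'a dalg"
  assumes "delta_algebra A"
  shows "delta_algebra (cont_dalg (MaxSpec A)) \<and>
         delta_hom A (cont_dalg (MaxSpec A)) (eta A) \<and>
         (\<forall>(B :: 'b dalg) f g. delta_algebra B \<longrightarrow>
            delta_hom (cont_dalg (MaxSpec A)) B f \<longrightarrow>
            delta_hom (cont_dalg (MaxSpec A)) B g \<longrightarrow>
            (\<forall>a\<in>dcar A. f (eta A a) = g (eta A a)) \<longrightarrow>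
            (\<forall>u\<in>dcar (cont_dalg (MaxSpec A)). f u = g u))"
proof (intro conjI allI impI)
  show "delta_algebra (cont_dalg (MaxSpec A))" by (rule cd_delta_algebra)
  show "delta_hom A (cont_dalg (MaxSpec A)) (eta A)" by (rule eta_hom[OF assms])
next
  fix B :: "'b dalg" and f g
  assume hf: "delta_hom (cont_dalg (MaxSpec A)) B f" and hg: "delta_hom (cont_dalg (MaxSpec A)) B g"
    and fg: "\<forall>a\<in>dcar A. f (eta A a) = g (eta A a)"
  define X where "X = MaxSpec A"
  define E where "E = {u \<in> dcar (cont_dalg X). f u = g u}"
  have "Esep X E"
  proof (unfold_locales)
    show "E \<subseteq> dcar (cont_dalg X)" unfolding E_def by auto
    show "dzero (cont_dalg X) \<in> E" unfolding E_def using hf hg zero_car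
      by (simp add: delta_hom_def X_def)
    show "dplus (cont_dalg X) a b \<in> E" if "a \<in> E" "b \<in> E" for a b
      using that hf hg plus_car unfolding E_def delta_hom_def X_def by auto
    show "dneg (cont_dalg X) a \<in> E" if "a \<in> E" for a
      using that hf hg neg_car unfolding E_def delta_hom_def X_def by auto
    show "ddelta (cont_dalg X) gs \<in> E" if gs: "\<And>i. gs i \<in> E" for gs
    proof -
      have c: "\<forall>i. gs i \<in> dcar (cont_dalg X)" and e: "\<And>i. f (gs i) = g (gs i)" using gs unfolding E_def by auto
      have "f (ddelta (cont_dalg X) gs) = ddelta B (\<lambda>i. f (gs i))" using hf c unfolding delta_hom_def X_def by auto
      also have "\<dots> = ddelta B (\<lambda>i. g (gs i))" using e by simp
      also have "\<dots> = g (ddelta (cont_dalg X) gs)" using hg c unfolding delta_hom_def X_def by auto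
      finally show ?thesis unfolding E_def using delta_car[of gs X] c by auto
    qed
    show "compact X" unfolding X_def by (rule compact_MaxSpec)
    show "\<exists>t\<in>E. t x \<noteq> t y" if xy: "x \<in> X" "y \<in> X" "x \<noteq> y" for x y
    proof -
      obtain a where a: "x a \<noteq> y a" using xy(3) by auto
      have ac: "a \<in> dcar A" using a MaxSpec_out[OF assms, of x a] MaxSpec_out[OF assms, of y a] xy unfolding X_def by auto
      have "eta A a \<in> E" unfolding E_def X_def using eta_car[OF assms ac] fg ac by auto
      moreover have "eta A a x \<noteq> eta A a y" using a xy unfolding eta_def X_def by auto
      ultimately show ?thesis by blast
    qed
  qed
  then have "E = dcar (cont_dalg X)" by (rule Esep_dense)
  then show "\<forall>u\<in>dcar (cont_dalg (MaxSpec A)). f u = g u" unfolding E_def X_def by auto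
qed

end
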